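(* No online algorithm for the generalized precedence-constrained scheduling (GPS) problem has a sub-polynomial competitive ratio; this holds even when restricted to instances in which all processing functions are equal to one fixed power function $p(z)=z^{\gamma}$.
   Context: The GPS problem: the input is a directed acyclic graph $G=(J,E)$ whose vertices are jobs, each job $j\in J$ having a size $s_j>0$; a number $m$ of identical machines; and for each job $j$ a non-decreasing concave processing function $p_j:[0,m]\to\mathbb{R}_{\ge 0}$ with $p_j(0)=0$. A schedule is a family of functions $A_t:J\to[0,m]$, $t\in(0,\infty)$, where $A_t(j)$ is the (possibly fractional) number of machines allocated to job $j$ at time $t$; preemption is allowed. It must satisfy $\sum_{j}A_t(j)\le m$ for all $t$, and for every arc $(j_1,j_2)\in E$ and every $t$, if $A_t(j_2)>0$ then $\int_0^t p_{j_1}(A_{t'}(j_1))\,dt'\ge s_{j_1}$; every job must be completed. The makespan is $\sup\{t:\sum_{j}A_t(j)>0\}$, to be minimized. A job is available at time $t$ if all its predecessors in $G$ have been completely processed by time $t$. An online algorithm is one that operates on instances where each job (with its size, processing function and outgoing precedence information) is revealed only at the moment it becomes available, and must make its allocation decisions at each time without knowledge of unrevealed jobs. Its competitive ratio is the supremum over instances of the ratio of its makespan to the optimal (offline) makespan; "sub-polynomial" means growing slower than any polynomial in the instance size. *)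

theory Defs
  imports "HOL-Analysis.Analysis"
begin

record gps_inst =
  jobs :: "nat set"
  arcs :: "(nat \<times> nat) set"
  jsize :: "nat \<Rightarrow> real"
  machines :: nat
  proc :: "nat \<Rightarrow> real \<Rightarrow> real"

text \<open>A schedule: A t j = number of machines given to job j at time t (only t > 0 matters).\<close>
type_synonym schedule = "real \<Rightarrow> nat \<Rightarrow> real"

definition valid_instance :: "gps_inst \<Rightarrow> bool" where
  "valid_instance I \<longleftrightarrow>
     finite (jobs I) \<and> arcs I \<subseteq> jobs I \<times> jobs I \<and> acyclic (arcs I) \<and>
     machines I \<ge> 1 \<and>
     (\<forall>j\<in>jobs I. jsize I j > 0) \<and>
     (\<forall>j\<in>jobs I. mono_on {0..real (machines I)} (proc I j) \<and>
                  concave_on {0..real (machines I)} (proc I j) \<and>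
                  (\<forall>z\<in>{0..real (machines I)}. proc I j z \<ge> 0) \<and>
                  proc I j 0 = 0)"

definition processed :: "gps_inst \<Rightarrow> schedule \<Rightarrow> nat \<Rightarrow> real \<Rightarrow> real" where
  "processed I A j t = integral {0..t} (\<lambda>t'. proc I j (A t' j))"

definition feasible :: "gps_inst \<Rightarrow> schedule \<Rightarrow> bool" where
  "feasible I A \<longleftrightarrow>
     (\<forall>t>0. \<forall>j. 0 \<le> A t j \<and> A t j \<le> real (machines I)) \<and>
     (\<forall>t>0. \<forall>j. j \<notin> jobs I \<longrightarrow> A t j = 0) \<and>
     (\<forall>t>0. (\<Sum>j\<in>jobs I. A t j) \<le> real (machines I)) \<and>
     (\<forall>j T. (\<lambda>t. proc I j (A t j)) integrable_on {0..T}) \<and>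
     (\<forall>(j1, j2)\<in>arcs I. \<forall>t>0. A t j2 > 0 \<longrightarrow> processed I A j1 t \<ge> jsize I j1) \<and>
     (\<forall>j\<in>jobs I. \<exists>T. processed I A j T \<ge> jsize I j)"

definition makespan :: "gps_inst \<Rightarrow> schedule \<Rightarrow> ereal" where
  "makespan I A = Sup (insert 0 {ereal t | t. t > 0 \<and> (\<Sum>j\<in>jobs I. A t j) > 0})"

definition opt :: "gps_inst \<Rightarrow> ereal" where
  "opt I = Inf {makespan I A | A. feasible I A}"

definition avail :: "gps_inst \<Rightarrow> schedule \<Rightarrow> real \<Rightarrow> nat set" where
  "avail I A t = {j \<in> jobs I. \<forall>i. (i, j) \<in> arcs I \<longrightarrow> processed I A i t \<ge> jsize I i}"

text \<open>Information revealed to an online algorithm at time t: the number of machines, the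
  available (revealed) jobs, their sizes, processing functions and outgoing arcs.\<close>
definition view :: "gps_inst \<Rightarrow> schedule \<Rightarrow> real \<Rightarrow>
    nat \<times> nat set \<times> (nat \<Rightarrow> real) \<times> (nat \<Rightarrow> real \<Rightarrow> real) \<times> (nat \<times> nat) set" where
  "view I A t = (let R = avail I A t in
     (machines I, R, (\<lambda>j. if j \<in> R then jsize I j else 0),
      (\<lambda>j. if j \<in> R then proc I j else (\<lambda>_. 0)), {(i, j) \<in> arcs I. i \<in> R}))"

definition online_alg :: "(gps_inst \<Rightarrow> bool) \<Rightarrow> (gps_inst \<Rightarrow> schedule) \<Rightarrow> bool" where
  "online_alg C ALG \<longleftrightarrow>
     (\<forall>I. C I \<longrightarrow> feasible I (ALG I)) \<and>
     (\<forall>I I' t. C I \<longrightarrow> C I' \<longrightarrow>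
        (\<forall>t'. 0 < t' \<and> t' \<le> t \<longrightarrow> view I (ALG I) t' = view I' (ALG I') t') \<longrightarrow>
        (\<forall>t'. 0 < t' \<and> t' \<le> t \<longrightarrow> ALG I t' = ALG I' t'))"

definition comp_ratio :: "(gps_inst \<Rightarrow> bool) \<Rightarrow> (gps_inst \<Rightarrow> schedule) \<Rightarrow> nat \<Rightarrow> ereal" where
  "comp_ratio C ALG n =
     Sup {makespan I (ALG I) / opt I | I. C I \<and> jobs I \<noteq> {} \<and> card (jobs I) \<le> n}"

definition subpolynomial :: "(nat \<Rightarrow> ereal) \<Rightarrow> bool" where
  "subpolynomial f \<longleftrightarrow> (\<forall>\<epsilon>>0. eventually (\<lambda>n. f n \<le> ereal (real n powr \<epsilon>)) sequentially)"

definition power_instance :: "real \<Rightarrow> gps_inst \<Rightarrow> bool" where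
  "power_instance \<gamma> I \<longleftrightarrow> valid_instance I \<and> proc I = (\<lambda>j z. z powr \<gamma>)"

end

theory Submission
  imports Defs
begin


lemma sqrt_concave_ineq:
  fixes x y t :: real
  assumes "0 \<le> x" "0 \<le> y" "0 \<le> t" "t \<le> 1"
  shows "(1-t) * sqrt x + t * sqrt y \<le> sqrt ((1-t) * x + t * y)"
proof (rule real_le_rsqrt)
  have "((1-t) * sqrt x + t * sqrt y)^2 = (1-t) * x + t * y - t * (1-t) * (sqrt x - sqrt y)^2"
    using assms by (simp add: power2_eq_square algebra_simps)
  also have "\<dots> \<le> (1-t) * x + t * y" using assms by simp
  finally show "((1-t) * sqrt x + t * sqrt y)^2 \<le> (1-t) * x + t * y" .
qed

lemma power_half_valid:
  fixes m :: real assumes "0 \<le> m"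
  shows "mono_on {0..m} (\<lambda>z::real. z powr (1/2)) \<and> concave_on {0..m} (\<lambda>z::real. z powr (1/2)) \<and>
         (\<forall>z\<in>{0..m}. z powr (1/2) \<ge> (0::real)) \<and> (0::real) powr (1/2) = 0"
proof (intro conjI)
  show "mono_on {0..m} (\<lambda>z::real. z powr (1/2))"
    by (auto simp: mono_on_def intro!: powr_mono2)
  show "concave_on {0..m} (\<lambda>z::real. z powr (1/2))"
    unfolding concave_on_iff
  proof (intro conjI ballI allI impI)
    fix x y u v :: real assume xy: "x \<in> {0..m}" "y \<in> {0..m}" and uv: "0 \<le> u" "0 \<le> v" "u + v = 1"
    have "u = 1 - v" using uv by simp
    have "(1-v) * sqrt x + v * sqrt y \<le> sqrt ((1-v) * x + v * y)"
      by (rule sqrt_concave_ineq) (use xy uv in auto)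
    then have "u * sqrt x + v * sqrt y \<le> sqrt (u * x + v * y)"
      using \<open>u = 1 - v\<close> by simp
    moreover have "u * x + v * y \<ge> 0" using xy uv by auto
    ultimately show "u * x powr (1/2) + v * y powr (1/2) \<le> (u *\<^sub>R x + v *\<^sub>R y) powr (1/2)"
      using xy by (simp add: powr_half_sqrt)
  qed simp
qed auto

lemma sum_sqrt_le:
  fixes x :: "nat \<Rightarrow> real" and K :: nat
  assumes "\<And>j. j < K \<Longrightarrow> 0 \<le> x j" "(\<Sum>j<K. x j) \<le> 1" "K \<ge> 1"
  shows "(\<Sum>j<K. sqrt (x j)) \<le> sqrt K"
proof -
  define s where "s = sqrt (real K)"
  have s0: "s > 0" "s * s = K" using assms(3) by (auto simp: s_def)
  have tm: "sqrt (x j) \<le> (x j * s + 1/s)/2" if "j < K" for j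
  proof -
    have "0 \<le> (sqrt (x j) * s - 1)^2" by simp
    also have "\<dots> = x j * (s * s) - 2 * sqrt (x j) * s + 1"
      using assms(1)[OF that] by (simp add: power2_eq_square algebra_simps)
    finally have "2 * sqrt (x j) * s \<le> x j * (s * s) + 1" by simp
    then have "2 * sqrt (x j) * s \<le> x j * s * s + 1" by (simp add: mult.assoc)
    then show ?thesis using s0 by (simp add: field_simps)
  qed
  have "(\<Sum>j<K. sqrt (x j)) \<le> (\<Sum>j<K. (x j * s + 1/s)/2)" by (rule sum_mono) (use tm in auto)
  also have "\<dots> = ((\<Sum>j<K. x j) * s + K/s)/2"
    by (simp add: sum.distrib sum_distrib_right flip: sum_divide_distrib)
  also have "\<dots> \<le> (s + K/s)/2" using assms(2) s0 by (simp add: mult_right_le_one_le)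
  also have "\<dots> = s" using s0 by (simp add: field_simps)
  finally show ?thesis by (simp add: s_def)
qed



definition good :: "gps_inst \<Rightarrow> schedule \<Rightarrow> bool" where
  "good I A \<longleftrightarrow> power_instance (1/2) I \<and> machines I = 1 \<and> feasible I A"

definition gf :: "schedule \<Rightarrow> nat \<Rightarrow> real \<Rightarrow> real" where
  "gf A j t = (if 0 < t then A t j powr (1/2) else 0)"

lemma good_proc: "good I A \<Longrightarrow> proc I = (\<lambda>j z. z powr (1/2))"
  by (simp add: good_def power_instance_def)

lemma good_A: assumes "good I A" "0 < t" shows "0 \<le> A t j \<and> A t j \<le> 1"
proof -
  have "\<forall>t>0. \<forall>j. 0 \<le> A t j \<and> A t j \<le> real (machines I)" "machines I = 1"
    using assms(1) by (auto simp: good_def feasible_def)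
  then show ?thesis using assms(2) by fastforce
qed

lemma gf_bounds: assumes "good I A" shows "0 \<le> gf A j t" "gf A j t \<le> 1"
proof -
  show "0 \<le> gf A j t" by (simp add: gf_def)
  show "gf A j t \<le> 1"
  proof (cases "0 < t")
    case True
    then have "0 \<le> A t j" "A t j \<le> 1" using good_A[OF assms] by auto
    then show ?thesis using True using powr_mono2[of "1/2" "A t j" 1] by (simp add: gf_def)
  qed (simp add: gf_def)
qed

lemma gf_integrable0: assumes "good I A" shows "gf A j integrable_on {0..T}"
proof -
  have "(\<lambda>t. proc I j (A t j)) integrable_on {0..T}" using assms by (simp add: good_def feasible_def)
  then have "(\<lambda>t. A t j powr (1/2)) integrable_on {0..T}" using good_proc[OF assms] by simp
  then show ?thesis
    by (rule integrable_spike_finite[where S="{0}", rotated 2]) (auto simp: gf_def)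
qed

lemma gf_integrable: assumes "good I A" "0 \<le> a" shows "gf A j integrable_on {a..b}"
proof (cases "a \<le> b")
  case True
  show ?thesis
    by (rule integrable_subinterval_real[OF gf_integrable0[OF assms(1), of j b]]) (use assms True in auto)
qed auto

lemma processed_gf: assumes "good I A" shows "processed I A j t = integral {0..t} (gf A j)"
  unfolding processed_def good_proc[OF assms]
  by (rule integral_spike[where S="{0}"]) (auto simp: gf_def)

lemma processed_split: assumes "good I A" "0 \<le> s" "s \<le> t"
  shows "processed I A j t = processed I A j s + integral {s..t} (gf A j)"
  unfolding processed_gf[OF assms(1)]
  using Henstock_Kurzweil_Integration.integral_combine[of 0 s t "gf A j"] assms gf_integrable0[OF assms(1)] by auto

lemma integral_gf_bounds: assumes "good I A" "0 \<le> s" "s \<le> t"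
  shows "0 \<le> integral {s..t} (gf A j)" "integral {s..t} (gf A j) \<le> t - s"
proof -
  show "0 \<le> integral {s..t} (gf A j)"
    by (rule integral_nonneg) (use gf_integrable[OF assms(1,2)] gf_bounds[OF assms(1)] in auto)
  have "integral {s..t} (gf A j) \<le> integral {s..t} (\<lambda>_. 1::real)"
    by (rule integral_le) (use gf_integrable[OF assms(1,2)] gf_bounds[OF assms(1)] in auto)
  also have "\<dots> = t - s" using assms by simp
  finally show "integral {s..t} (gf A j) \<le> t - s" .
qed

lemma processed_mono: assumes "good I A" "0 \<le> s" "s \<le> t"
  shows "processed I A j s \<le> processed I A j t"
  using processed_split[OF assms, of j] integral_gf_bounds[OF assms, of j] by simp

lemma processed_incr: assumes "good I A" "0 \<le> s" "s \<le> t"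
  shows "processed I A j t \<le> processed I A j s + (t - s)"
  using processed_split[OF assms, of j] integral_gf_bounds[OF assms, of j] by simp

lemma processed_0: "processed I A j 0 = 0"
  by (simp add: processed_def)

lemma processed_nonneg: assumes "good I A" "0 \<le> t" shows "0 \<le> processed I A j t"
  using processed_mono[OF assms(1) order_refl assms(2), of j] by (simp add: processed_0)

lemma processed_cont: assumes "good I A" shows "continuous_on {0..T} (processed I A j)"
proof -
  have "continuous_on {0..T} (\<lambda>x. integral {0..x} (gf A j))"
    by (rule indefinite_integral_continuous_1[OF gf_integrable0[OF assms]])
  then show ?thesis using processed_gf[OF assms] by simp
qed

lemma processed_cong:
  assumes "good I A" "good I' B" "\<And>t. 0 < t \<Longrightarrow> t < s \<Longrightarrow> A t j = B t j"
  shows "processed I A j s = processed I' B j s"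
  unfolding processed_gf[OF assms(1)] processed_gf[OF assms(2)]
  by (rule integral_spike[where S="{s}"]) (auto simp: gf_def assms(3))

lemma processed_zero:
  assumes "good I A" "\<And>t. 0 < t \<Longrightarrow> t < s \<Longrightarrow> A t j = 0"
  shows "processed I A j s = 0"
proof -
  have "processed I A j s = integral {0..s} (\<lambda>_. 0::real)"
    unfolding processed_gf[OF assms(1)]
    by (rule integral_spike[where S="{s}"]) (auto simp: gf_def assms(2))
  then show ?thesis by simp
qed

lemma zero_succ:
  assumes "good I A" "(x, y) \<in> arcs I" "processed I A x s < jsize I x" "0 \<le> s"
  shows "processed I A y s = 0"
proof (rule processed_zero[OF assms(1)])
  fix t assume t: "0 < t" "t < s"
  have "processed I A x t \<le> processed I A x s" by (rule processed_mono) (use assms t in auto)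
  then have "\<not> A t y > 0" using assms(1,2,3) t unfolding good_def feasible_def by fastforce
  then show "A t y = 0" using good_A[OF assms(1) t(1), of y] by simp
qed



lemma good_valid: "good I A \<Longrightarrow> valid_instance I"
  by (simp add: good_def power_instance_def)

lemma status_eventually:
  assumes "good I A" "0 \<le> s"
  shows "eventually (\<lambda>t. (jsize I i \<le> processed I A i t) = (jsize I i \<le> processed I A i s)) (at_right s)"
proof (cases "jsize I i \<le> processed I A i s")
  case True
  have "eventually (\<lambda>t. s < t) (at_right s)" by (rule eventually_at_right_less)
  then show ?thesis
  proof (rule eventually_mono)
    fix t assume "s < t"
    then show "(jsize I i \<le> processed I A i t) = (jsize I i \<le> processed I A i s)"
      using True processed_mono[OF assms(1,2), of t i] by auto
  qed
next
  case False
  define g where "g = jsize I i - processed I A i s"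
  have g: "g > 0" using False by (simp add: g_def)
  show ?thesis unfolding eventually_at_right_field
  proof (intro exI[of _ "s + g"] conjI allI impI)
    show "s < s + g" using g by simp
    fix t assume "s < t" "t < s + g"
    then have "processed I A i t \<le> processed I A i s + (t - s)"
      using processed_incr[OF assms(1,2), of t i] by simp
    then show "(jsize I i \<le> processed I A i t) = (jsize I i \<le> processed I A i s)"
      using False \<open>t < s + g\<close> by (simp add: g_def)
  qed
qed

lemma view_eventually:
  assumes "good I A" "0 \<le> s"
  shows "eventually (\<lambda>t. view I A t = view I A s) (at_right s)"
proof -
  have v: "finite (jobs I)" "arcs I \<subseteq> jobs I \<times> jobs I"
    using good_valid[OF assms(1)] by (auto simp: valid_instance_def)
  have "eventually (\<lambda>t. \<forall>i\<in>jobs I. (jsize I i \<le> processed I A i t) = (jsize I i \<le> processed I A i s)) (at_right s)"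
    by (rule eventually_ball_finite) (use v status_eventually[OF assms] in auto)
  then show ?thesis
  proof (rule eventually_mono)
    fix t assume h: "\<forall>i\<in>jobs I. (jsize I i \<le> processed I A i t) = (jsize I i \<le> processed I A i s)"
    have "avail I A t = avail I A s"
      unfolding avail_def using h v(2) by blast
    then show "view I A t = view I A s" by (simp add: view_def)
  qed
qed

lemma agree:
  assumes alg: "online_alg (power_instance (1/2)) ALG"
    and CI: "power_instance (1/2) I" "power_instance (1/2) I'"
    and m: "machines I = 1" "machines I' = 1"
    and H: "\<And>s. 0 \<le> s \<Longrightarrow> s < \<tau> \<Longrightarrow> (\<forall>j. processed I (ALG I) j s = processed I' (ALG I') j s)
              \<Longrightarrow> view I (ALG I) s = view I' (ALG I') s"
  shows "\<And>t. 0 < t \<Longrightarrow> t < \<tau> \<Longrightarrow> ALG I t = ALG I' t"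
proof (rule ccontr)
  define A where "A = ALG I"
  define B where "B = ALG I'"
  have gA: "good I A" and gB: "good I' B"
    using alg CI m by (auto simp: good_def online_alg_def A_def B_def)
  have onl: "\<And>t. (\<forall>t'. 0 < t' \<and> t' \<le> t \<longrightarrow> view I A t' = view I' B t') \<Longrightarrow>
      (\<forall>t'. 0 < t' \<and> t' \<le> t \<longrightarrow> A t' = B t')"
    using alg CI unfolding online_alg_def A_def B_def by blast
  fix t0 assume t0: "0 < t0" "t0 < \<tau>" and ne: "ALG I t0 \<noteq> ALG I' t0"
  define D where "D = {t. 0 < t \<and> t < \<tau> \<and> A t \<noteq> B t}"
  have t0D: "t0 \<in> D" using t0 ne by (simp add: D_def A_def B_def)
  have bdd: "bdd_below D" by (rule bdd_belowI[of _ 0]) (auto simp: D_def)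
  define \<sigma> where "\<sigma> = Inf D"
  have s0: "0 \<le> \<sigma>" unfolding \<sigma>_def by (rule cInf_greatest) (use t0D in \<open>auto simp: D_def\<close>)
  have sle: "\<sigma> \<le> t0" unfolding \<sigma>_def by (rule cInf_lower[OF t0D bdd])
  have below: "A t = B t" if "0 < t" "t < \<sigma>" for t
  proof (rule ccontr)
    assume "A t \<noteq> B t"
    then have "t \<in> D" using that sle t0 by (auto simp: D_def)
    then have "\<sigma> \<le> t" unfolding \<sigma>_def by (rule cInf_lower[OF _ bdd])
    then show False using that by simp
  qed
  have proc_eq: "\<forall>j. processed I A j s = processed I' B j s" if "0 \<le> s" "s \<le> \<sigma>" for s
  proof
    fix j show "processed I A j s = processed I' B j s"
      by (rule processed_cong[OF gA gB]) (use below that in auto)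
  qed
  have view_eq: "view I A s = view I' B s" if "0 \<le> s" "s \<le> \<sigma>" for s
    using H[of s] proc_eq[OF that] that sle t0 by (simp add: A_def B_def)
  have ev: "eventually (\<lambda>t. view I A t = view I A \<sigma> \<and> view I' B t = view I' B \<sigma> \<and> t < \<tau>) (at_right \<sigma>)"
  proof (intro eventually_conj view_eventually[OF gA s0] view_eventually[OF gB s0])
    show "eventually (\<lambda>t. t < \<tau>) (at_right \<sigma>)"
      unfolding eventually_at_right_field using sle t0 by (intro exI[of _ \<tau>]) auto
  qed
  then obtain b where b: "b > \<sigma>" "\<And>y. \<sigma> < y \<Longrightarrow> y < b \<Longrightarrow>
       view I A y = view I A \<sigma> \<and> view I' B y = view I' B \<sigma> \<and> y < \<tau>"
    unfolding eventually_at_right_field by blast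
  define t1 where "t1 = (\<sigma> + b) / 2"
  have t1: "\<sigma> < t1" "t1 < b" using b(1) by (auto simp: t1_def)
  have "\<forall>t'. 0 < t' \<and> t' \<le> t1 \<longrightarrow> view I A t' = view I' B t'"
  proof (intro allI impI)
    fix t' assume t': "0 < t' \<and> t' \<le> t1"
    show "view I A t' = view I' B t'"
    proof (cases "t' \<le> \<sigma>")
      case True then show ?thesis using view_eq t' by simp
    next
      case False
      then show ?thesis using b(2)[of t'] t' t1 view_eq[of \<sigma>] s0 by auto
    qed
  qed
  then have agree1: "\<And>t'. 0 < t' \<Longrightarrow> t' \<le> t1 \<Longrightarrow> A t' = B t'" using onl by blast
  have "t1 \<le> \<sigma>" unfolding \<sigma>_def
  proof (rule cInf_greatest)
    show "D \<noteq> {}" using t0D by auto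
    fix x assume "x \<in> D"
    then show "t1 \<le> x" using agree1[of x] by (force simp: D_def)
  qed
  then show False using t1 by simp
qed



definition aj :: "nat \<Rightarrow> nat \<Rightarrow> nat \<Rightarrow> nat" where "aj K l j = 2 * (l * K + j)"
definition cj :: "nat \<Rightarrow> nat \<Rightarrow> nat \<Rightarrow> nat" where "cj K l j = 2 * (l * K + j) + 1"

definition inst :: "nat \<Rightarrow> nat \<Rightarrow> (nat \<Rightarrow> nat) \<Rightarrow> gps_inst" where
  "inst K L f = \<lparr>jobs = {..<2 * L * K},
     arcs = {(aj K l j, cj K l j) | l j. l < L \<and> j < K} \<union>
            {(cj K l (f l), aj K (Suc l) j) | l j. Suc l < L \<and> j < K},
     jsize = (\<lambda>_. 1), machines = 1, proc = (\<lambda>j z. z powr (1/2))\<rparr>"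

lemma inst_simps[simp]:
  "jobs (inst K L f) = {..<2 * L * K}" "jsize (inst K L f) = (\<lambda>_. 1)" "machines (inst K L f) = 1"
  "proc (inst K L f) = (\<lambda>j z. z powr (1/2))"
  by (simp_all add: inst_def)

lemma arcs_inst: "(y, x) \<in> arcs (inst K L f) \<longleftrightarrow>
   (\<exists>l j. l < L \<and> j < K \<and> y = aj K l j \<and> x = cj K l j) \<or>
   (\<exists>l j. Suc l < L \<and> j < K \<and> y = cj K l (f l) \<and> x = aj K (Suc l) j)"
  by (auto simp: inst_def)

lemma aj_lt: "l < L \<Longrightarrow> j < K \<Longrightarrow> aj K l j < 2 * L * K"
proof -
  assume "l < L" "j < K"
  then have "l * K + j < Suc l * K" by simp
  also have "Suc l * K \<le> L * K" using \<open>l < L\<close> by (intro mult_le_mono1) simp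
  finally have "l * K + j < L * K" .
  then show ?thesis by (simp add: aj_def)
qed

lemma cj_lt: "l < L \<Longrightarrow> j < K \<Longrightarrow> cj K l j < 2 * L * K"
proof -
  assume "l < L" "j < K"
  then have "l * K + j < Suc l * K" by simp
  also have "Suc l * K \<le> L * K" using \<open>l < L\<close> by (intro mult_le_mono1) simp
  finally have "l * K + j < L * K" .
  then show ?thesis by (simp add: cj_def)
qed

lemma aj_ge: "2 * l * K \<le> aj K l j" by (simp add: aj_def)
lemma cj_ge: "2 * l * K \<le> cj K l j" by (simp add: cj_def)

lemma lt_level: "2 * l * (K::nat) \<le> x \<Longrightarrow> x < 2 * L * K \<Longrightarrow> l < L"
proof (rule ccontr)
  assume "2 * l * K \<le> x" "x < 2 * L * K" "\<not> l < L"
  then have "2 * L \<le> 2 * l" by simp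
  then have "2 * L * K \<le> 2 * l * K" by (rule mult_le_mono1)
  then show False using \<open>2 * l * K \<le> x\<close> \<open>x < 2 * L * K\<close> by linarith
qed

lemma aj_cj_neq[simp]: "aj K l j \<noteq> cj K l' j'" "cj K l' j' \<noteq> aj K l j"
proof -
  show "aj K l j \<noteq> cj K l' j'" unfolding aj_def cj_def by (metis even_mult_iff even_numeral odd_one even_add)
  then show "cj K l' j' \<noteq> aj K l j" by metis
qed

lemma lj_inj:
  fixes l K j l' j' :: nat
  assumes "l * K + j = l' * K + j'" "j < K" "j' < K"
  shows "l = l' \<and> j = j'"
proof -
  have "l = (l * K + j) div K" using assms(2) by simp
  also have "\<dots> = (l' * K + j') div K" using assms(1) by (rule arg_cong)
  also have "\<dots> = l'" using assms(3) by simp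
  finally have 1: "l = l'" .
  have "j = (l * K + j) mod K" using assms(2) by simp
  also have "\<dots> = (l' * K + j') mod K" using assms(1) by (rule arg_cong)
  also have "\<dots> = j'" using assms(3) by simp
  finally show ?thesis using 1 by simp
qed

lemma aj_inj[simp]: "j < K \<Longrightarrow> j' < K \<Longrightarrow> aj K l j = aj K l' j' \<longleftrightarrow> l = l' \<and> j = j'"
  using lj_inj[of l K j l' j'] by (auto simp: aj_def)

lemma cj_inj[simp]: "j < K \<Longrightarrow> j' < K \<Longrightarrow> cj K l j = cj K l' j' \<longleftrightarrow> l = l' \<and> j = j'"
  using lj_inj[of l K j l' j'] by (auto simp: cj_def)

lemma decode:
  assumes "x < 2 * L * K"
  shows "\<exists>l j. l < L \<and> j < K \<and> (x = aj K l j \<or> x = cj K l j)"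
proof -
  define l where "l = x div 2 div K"
  define j where "j = x div 2 mod K"
  have K: "K > 0" using assms by (cases K) auto
  have "x div 2 = l * K + j" by (simp add: l_def j_def)
  moreover have "x = 2 * (x div 2) \<or> x = 2 * (x div 2) + 1" by auto
  ultimately have "x = aj K l j \<or> x = cj K l j" by (auto simp: aj_def cj_def)
  moreover have "j < K" using K by (simp add: j_def)
  moreover have "l < L"
  proof -
    have "x div 2 < L * K" using assms by auto
    then show ?thesis unfolding l_def by (simp add: div_less_iff_less_mult K)
  qed
  ultimately show ?thesis by blast
qed

lemma inst_valid:
  assumes "\<And>l. f l < K" "K \<ge> 1" "L \<ge> 1"
  shows "power_instance (1/2) (inst K L f)"
proof -
  have sub: "arcs (inst K L f) \<subseteq> jobs (inst K L f) \<times> jobs (inst K L f)"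
  proof
    fix p assume "p \<in> arcs (inst K L f)"
    then obtain y x where p: "p = (y, x)" "(y, x) \<in> arcs (inst K L f)" by (cases p) auto
    then show "p \<in> jobs (inst K L f) \<times> jobs (inst K L f)"
      unfolding arcs_inst using aj_lt cj_lt assms(1) by (auto dest: Suc_lessD)
  qed
  have lt: "arcs (inst K L f) \<subseteq> less_than"
  proof
    fix p assume "p \<in> arcs (inst K L f)"
    then obtain y x where p: "p = (y, x)" "(y, x) \<in> arcs (inst K L f)" by (cases p) auto
    have "y < x"
      using p(2) unfolding arcs_inst
    proof (elim disjE exE conjE)
      fix l j assume "y = aj K l j" "x = cj K l j" then show "y < x" by (simp add: aj_def cj_def)
    next
      fix l j assume h: "y = cj K l (f l)" "x = aj K (Suc l) j"
      have "l * K + f l < Suc l * K" using assms(1)[of l] by simp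
      then show "y < x" using h by (simp add: aj_def cj_def)
    qed
    then show "p \<in> less_than" using p by simp
  qed
  have ac: "acyclic (arcs (inst K L f))"
    by (rule acyclic_subset[OF wf_acyclic[OF wf_less_than] lt])
  show ?thesis
    unfolding power_instance_def valid_instance_def
    using sub ac assms power_half_valid[of 1] by auto
qed



lemma arcs_mono: assumes "L \<le> L'" "(y, x) \<in> arcs (inst K L f)" shows "(y, x) \<in> arcs (inst K L' f)"
  using assms(2) unfolding arcs_inst
proof (elim disjE exE conjE)
  fix l j assume "l < L" "j < K" "y = aj K l j" "x = cj K l j"
  then show "(\<exists>l j. l < L' \<and> j < K \<and> y = aj K l j \<and> x = cj K l j) \<or>
    (\<exists>l j. Suc l < L' \<and> j < K \<and> y = cj K l (f l) \<and> x = aj K (Suc l) j)"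
    using assms(1) by (intro disjI1 exI[of _ l] exI[of _ j]) simp
next
  fix l j assume "Suc l < L" "j < K" "y = cj K l (f l)" "x = aj K (Suc l) j"
  then show "(\<exists>l j. l < L' \<and> j < K \<and> y = aj K l j \<and> x = cj K l j) \<or>
    (\<exists>l j. Suc l < L' \<and> j < K \<and> y = cj K l (f l) \<and> x = aj K (Suc l) j)"
    using assms(1) by (intro disjI2 exI[of _ l] exI[of _ j]) simp
qed

lemma arcs_into:
  assumes "x < 2 * L * K" "L \<le> L'"
  shows "(y, x) \<in> arcs (inst K L' f) \<longleftrightarrow> (y, x) \<in> arcs (inst K L f)"
proof
  assume "(y, x) \<in> arcs (inst K L' f)"
  then show "(y, x) \<in> arcs (inst K L f)" unfolding arcs_inst
  proof (elim disjE exE conjE)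
    fix l j assume h: "l < L'" "j < K" "y = aj K l j" "x = cj K l j"
    then have "l < L" using lt_level[OF cj_ge assms(1)[unfolded h(4)]] by simp
    then show "(\<exists>l j. l < L \<and> j < K \<and> y = aj K l j \<and> x = cj K l j) \<or>
      (\<exists>l j. Suc l < L \<and> j < K \<and> y = cj K l (f l) \<and> x = aj K (Suc l) j)" using h by blast
  next
    fix l j assume h: "Suc l < L'" "j < K" "y = cj K l (f l)" "x = aj K (Suc l) j"
    then have "Suc l < L" using lt_level[OF aj_ge assms(1)[unfolded h(4)]] by simp
    then show "(\<exists>l j. l < L \<and> j < K \<and> y = aj K l j \<and> x = cj K l j) \<or>
      (\<exists>l j. Suc l < L \<and> j < K \<and> y = cj K l (f l) \<and> x = aj K (Suc l) j)" using h by blast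
  qed
qed (rule arcs_mono[OF assms(2)])

lemma view_match:
  assumes gA: "good (inst K L' f) A" and gB: "good (inst K L f) B"
    and LL: "L \<le> L'" "1 \<le> L" and fK: "\<forall>l. f l < K"
    and peq: "\<forall>j. processed (inst K L' f) A j s = processed (inst K L f) B j s" and s0: "0 \<le> s"
    and nd: "processed (inst K L f) B (aj K (L - 1) (f (L - 1))) s < 1"
  shows "view (inst K L' f) A s = view (inst K L f) B s"
proof -
  define i where "i = L - 1"
  have iL: "i < L" "Suc i = L" using LL by (auto simp: i_def)
  let ?J = "inst K L' f" and ?I = "inst K L f"
  have ndA: "processed ?J A (aj K i (f i)) s < 1" using nd peq by (simp add: i_def)
  have chain: "processed ?J A (cj K (i + n) (f (i + n))) s = 0" if "i + n < L'" for n
    using that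
  proof (induction n)
    case 0
    have "(aj K i (f i), cj K i (f i)) \<in> arcs ?J" unfolding arcs_inst using 0 fK by auto
    then show ?case using zero_succ[OF gA _ _ s0] ndA by simp
  next
    case (Suc n)
    have prev: "processed ?J A (cj K (i + n) (f (i + n))) s = 0" using Suc by simp
    have "(cj K (i + n) (f (i + n)), aj K (Suc (i + n)) (f (Suc (i + n)))) \<in> arcs ?J"
      unfolding arcs_inst using Suc.prems fK by auto
    then have "processed ?J A (aj K (Suc (i + n)) (f (Suc (i + n)))) s = 0"
      using zero_succ[OF gA _ _ s0] prev by simp
    moreover have "(aj K (Suc (i + n)) (f (Suc (i + n))), cj K (Suc (i + n)) (f (Suc (i + n)))) \<in> arcs ?J"
      unfolding arcs_inst using Suc.prems fK by auto
    ultimately show ?case using zero_succ[OF gA _ _ s0] by simp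
  qed
  have chain': "processed ?J A (cj K l (f l)) s = 0" if "i \<le> l" "l < L'" for l
    using chain[of "l - i"] that by simp
  have notav: "x \<notin> avail ?J A s" if "2 * L * K \<le> x" for x
  proof
    assume xa: "x \<in> avail ?J A s"
    then have "x < 2 * L' * K" by (simp add: avail_def)
    then obtain l j where lj: "l < L'" "j < K" "x = aj K l j \<or> x = cj K l j" using decode by blast
    have "L \<le> l"
    proof (rule ccontr)
      assume "\<not> L \<le> l"
      then have "x < 2 * L * K" using lj aj_lt cj_lt by auto
      then show False using that by simp
    qed
    then obtain l0 where l0: "l = Suc l0" "i \<le> l0" using iL by (cases l) auto
    have arc1: "(cj K l0 (f l0), aj K l j) \<in> arcs ?J" unfolding arcs_inst using lj l0 by auto
    have p0: "processed ?J A (cj K l0 (f l0)) s = 0" using chain' l0 lj by simp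
    have pa: "processed ?J A (aj K l j) s = 0" using zero_succ[OF gA arc1 _ s0] p0 by simp
    show False using lj(3)
    proof
      assume "x = aj K l j"
      then show False using xa arc1 p0 by (auto simp: avail_def)
    next
      assume "x = cj K l j"
      moreover have "(aj K l j, cj K l j) \<in> arcs ?J" unfolding arcs_inst using lj by auto
      ultimately show False using xa pa by (auto simp: avail_def)
    qed
  qed
  have av: "avail ?J A s = avail ?I B s"
  proof (intro set_eqI iffI)
    fix x assume xa: "x \<in> avail ?J A s"
    then have xl: "x < 2 * L * K" using notav by (meson not_le)
    then show "x \<in> avail ?I B s"
      using xa arcs_into[OF xl LL(1), of _ f] peq by (auto simp: avail_def)
  next
    fix x assume xa: "x \<in> avail ?I B s"
    then have xl: "x < 2 * L * K" by (simp add: avail_def)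
    have "2 * L * K \<le> 2 * L' * K" by (intro mult_le_mono1) (use LL(1) in simp)
    then have "x < 2 * L' * K" using xl by linarith
    then show "x \<in> avail ?J A s"
      using xa xl arcs_into[OF xl LL(1), of _ f] peq by (auto simp: avail_def)
  qed
  have cnot: "cj K i (f i) \<notin> avail ?I B s"
  proof
    assume "cj K i (f i) \<in> avail ?I B s"
    moreover have "(aj K i (f i), cj K i (f i)) \<in> arcs ?I" unfolding arcs_inst using iL fK by auto
    ultimately show False using nd by (auto simp: avail_def i_def)
  qed
  have out: "{(a, b) \<in> arcs ?J. a \<in> avail ?I B s} = {(a, b) \<in> arcs ?I. a \<in> avail ?I B s}"
  proof (intro set_eqI iffI)
    fix p assume "p \<in> {(a, b) \<in> arcs ?I. a \<in> avail ?I B s}"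
    then show "p \<in> {(a, b) \<in> arcs ?J. a \<in> avail ?I B s}" using arcs_mono[OF LL(1)] by auto
  next
    fix p assume "p \<in> {(a, b) \<in> arcs ?J. a \<in> avail ?I B s}"
    then obtain a b where p: "p = (a, b)" "(a, b) \<in> arcs ?J" "a \<in> avail ?I B s" by auto
    have al: "a < 2 * L * K" using p(3) by (simp add: avail_def)
    have "(a, b) \<in> arcs ?I" using p(2) unfolding arcs_inst
    proof (elim disjE exE conjE)
      fix l j assume h: "l < L'" "j < K" "a = aj K l j" "b = cj K l j"
      then have "l < L" using lt_level[OF aj_ge al[unfolded h(3)]] by simp
      then show "(\<exists>l j. l < L \<and> j < K \<and> a = aj K l j \<and> b = cj K l j) \<or>
        (\<exists>l j. Suc l < L \<and> j < K \<and> a = cj K l (f l) \<and> b = aj K (Suc l) j)" using h by blast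
    next
      fix l j assume h: "Suc l < L'" "j < K" "a = cj K l (f l)" "b = aj K (Suc l) j"
      then have "l < L" using lt_level[OF cj_ge al[unfolded h(3)]] by simp
      moreover have "l \<noteq> i" using cnot p(3) h(3) by auto
      ultimately have "Suc l < L" using iL by linarith
      then show "(\<exists>l j. l < L \<and> j < K \<and> a = aj K l j \<and> b = cj K l j) \<or>
        (\<exists>l j. Suc l < L \<and> j < K \<and> a = cj K l (f l) \<and> b = aj K (Suc l) j)" using h by blast
    qed
    then show "p \<in> {(a, b) \<in> arcs ?I. a \<in> avail ?I B s}" using p by auto
  qed
  show ?thesis unfolding view_def Let_def av inst_simps out by (rule refl)
qed



lemma good_fin: "good I A \<Longrightarrow> finite (jobs I)"
  using good_valid by (auto simp: valid_instance_def)

lemma good_sum: assumes "good I A" "0 < t" shows "(\<Sum>y\<in>jobs I. A t y) \<le> 1"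
proof -
  have "\<forall>t>0. (\<Sum>j\<in>jobs I. A t j) \<le> real (machines I)" "machines I = 1"
    using assms(1) by (auto simp: good_def feasible_def)
  then show ?thesis using assms(2) by fastforce
qed

lemma good_done: assumes "good I A" "x \<in> jobs I" shows "\<exists>T. jsize I x \<le> processed I A x T"
  using assms by (auto simp: good_def feasible_def)

definition ctime :: "gps_inst \<Rightarrow> schedule \<Rightarrow> nat \<Rightarrow> real" where
  "ctime I A x = Inf {t. 0 \<le> t \<and> jsize I x \<le> processed I A x t}"

lemma ctime_props:
  assumes g: "good I A" and x: "x \<in> jobs I" "0 < jsize I x"
  shows "0 < ctime I A x" "jsize I x \<le> processed I A x (ctime I A x)"
    "\<And>t. 0 \<le> t \<Longrightarrow> t < ctime I A x \<Longrightarrow> processed I A x t < jsize I x"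
proof -
  define S where "S = {t. 0 \<le> t \<and> jsize I x \<le> processed I A x t}"
  obtain T where T: "jsize I x \<le> processed I A x T" using good_done[OF g x(1)] by blast
  have "0 \<le> T"
  proof (rule ccontr)
    assume "\<not> 0 \<le> T"
    then have "processed I A x T = 0" by (simp add: processed_def)
    then show False using T x(2) by simp
  qed
  then have Sne: "S \<noteq> {}" using T by (auto simp: S_def)
  have bdd: "bdd_below S" by (rule bdd_belowI[of _ 0]) (auto simp: S_def)
  define c where "c = Inf S"
  have c0: "0 \<le> c" unfolding c_def by (rule cInf_greatest[OF Sne]) (auto simp: S_def)
  have attained: "jsize I x \<le> processed I A x c"
  proof (rule ccontr)
    assume nc: "\<not> jsize I x \<le> processed I A x c"
    have "eventually (\<lambda>t. (jsize I x \<le> processed I A x t) = (jsize I x \<le> processed I A x c)) (at_right c)"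
      by (rule status_eventually[OF g c0])
    then obtain b where b: "b > c" "\<And>y. c < y \<Longrightarrow> y < b \<Longrightarrow> \<not> jsize I x \<le> processed I A x y"
      unfolding eventually_at_right_field using nc by blast
    have "Inf S < b" using b(1) by (simp add: c_def)
    then obtain y where y: "y \<in> S" "y < b" using cInf_less_iff[OF Sne bdd] by blast
    have "c \<le> y" unfolding c_def by (rule cInf_lower[OF y(1) bdd])
    then show False
    proof (cases "c = y")
      case True then show False using y(1) nc by (simp add: S_def)
    next
      case False then show False using b(2)[of y] y \<open>c \<le> y\<close> by (simp add: S_def)
    qed
  qed
  have below: "processed I A x t < jsize I x" if "0 \<le> t" "t < c" for t
  proof (rule ccontr)
    assume "\<not> processed I A x t < jsize I x"
    then have "t \<in> S" using that by (simp add: S_def)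
    then have "c \<le> t" unfolding c_def by (rule cInf_lower[OF _ bdd])
    then show False using that by simp
  qed
  have "c \<noteq> 0" using attained x(2) by (auto simp: processed_0)
  then show "0 < ctime I A x" using c0 by (simp add: ctime_def S_def[symmetric] c_def[symmetric])
  show "jsize I x \<le> processed I A x (ctime I A x)"
    using attained by (simp add: ctime_def S_def[symmetric] c_def[symmetric])
  show "\<And>t. 0 \<le> t \<Longrightarrow> t < ctime I A x \<Longrightarrow> processed I A x t < jsize I x"
    using below by (simp add: ctime_def S_def[symmetric] c_def[symmetric])
qed

lemma work_bound:
  fixes x :: "nat \<Rightarrow> nat" and K :: nat
  assumes g: "good I A" and K: "K \<ge> 1" and inj: "inj_on x {..<K}" and sub: "x ` {..<K} \<subseteq> jobs I"
    and b: "0 \<le> b" and z: "\<And>j t. j < K \<Longrightarrow> 0 < t \<Longrightarrow> t \<le> b \<Longrightarrow> A t (x j) = 0"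
    and d: "\<And>j. j < K \<Longrightarrow> 1 \<le> processed I A (x j) e"
  shows "b + sqrt K \<le> e"
proof -
  have eb: "b \<le> e"
  proof (rule ccontr)
    assume "\<not> b \<le> e"
    then have "processed I A (x 0) e = 0"
      by (intro processed_zero[OF g]) (use z K in auto)
    then show False using d[of 0] K by simp
  qed
  have pj: "processed I A (x j) e = integral {b..e} (gf A (x j))" if "j < K" for j
  proof -
    have "processed I A (x j) b = 0" by (intro processed_zero[OF g]) (use z that in auto)
    then show ?thesis using processed_split[OF g b eb, of "x j"] by simp
  qed
  have pw: "(\<Sum>j<K. gf A (x j) t) \<le> sqrt K" for t
  proof (cases "0 < t")
    case True
    have "(\<Sum>j<K. A t (x j)) = (\<Sum>y\<in>x ` {..<K}. A t y)" by (simp add: sum.reindex[OF inj])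
    also have "\<dots> \<le> (\<Sum>y\<in>jobs I. A t y)"
      by (rule sum_mono2[OF good_fin[OF g] sub]) (use good_A[OF g True] in auto)
    also have "\<dots> \<le> 1" by (rule good_sum[OF g True])
    finally have s1: "(\<Sum>j<K. A t (x j)) \<le> 1" .
    have "(\<Sum>j<K. gf A (x j) t) = (\<Sum>j<K. sqrt (A t (x j)))"
      using True good_A[OF g True] by (simp add: gf_def powr_half_sqrt)
    also have "\<dots> \<le> sqrt K"
      by (rule sum_sqrt_le) (use s1 K good_A[OF g True] in auto)
    finally show ?thesis .
  next
    case False then show ?thesis by (simp add: gf_def)
  qed
  have "real K = (\<Sum>j<K. 1)" by simp
  also have "\<dots> \<le> (\<Sum>j<K. processed I A (x j) e)" by (rule sum_mono) (use d in auto)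
  also have "\<dots> = (\<Sum>j<K. integral {b..e} (gf A (x j)))" using pj by simp
  also have "\<dots> = integral {b..e} (\<lambda>t. \<Sum>j<K. gf A (x j) t)"
    by (rule Henstock_Kurzweil_Integration.integral_sum[symmetric]) (use gf_integrable[OF g b] in auto)
  also have "\<dots> \<le> integral {b..e} (\<lambda>_. sqrt K)"
    by (rule integral_le) (use gf_integrable[OF g b] pw in \<open>auto intro!: integrable_sum\<close>)
  also have "\<dots> = sqrt K * (e - b)" using eb by simp
  finally have "real K \<le> sqrt K * (e - b)" .
  moreover have "sqrt K * sqrt K = real K" by simp
  moreover have "sqrt K > 0" using K by simp
  ultimately have "sqrt K * sqrt K \<le> sqrt K * (e - b)" by simp
  then have "sqrt K \<le> e - b" by (rule mult_left_le_imp_le[OF _ \<open>sqrt K > 0\<close>])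
  then show ?thesis by simp
qed

lemma makespan_lower:
  assumes g: "good I A" and x: "x \<in> jobs I" and e: "0 < e"
    and nd: "\<And>t. 0 \<le> t \<Longrightarrow> t < e \<Longrightarrow> processed I A x t < 1" and d: "1 \<le> processed I A x e"
  shows "ereal (e / 2) \<le> makespan I A"
proof (rule ccontr)
  assume nl: "\<not> ereal (e / 2) \<le> makespan I A"
  have small: "\<not> (\<Sum>j\<in>jobs I. A t j) > 0" if "e / 2 \<le> t" for t
  proof
    assume "(\<Sum>j\<in>jobs I. A t j) > 0"
    then have "ereal t \<in> insert 0 {ereal t | t. t > 0 \<and> (\<Sum>j\<in>jobs I. A t j) > 0}" using that e by auto
    then have "ereal t \<le> makespan I A" unfolding makespan_def by (rule Sup_upper)
    then show False using nl that by (meson ereal_less_eq(3) order_trans)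
  qed
  have zero: "A t x = 0" if "e / 2 < t" for t
  proof -
    have t0: "0 < t" using that e by simp
    have "(\<Sum>j\<in>jobs I. A t j) = 0" using small[of t] that good_A[OF g t0]
      by (meson less_eq_real_def sum_nonneg not_le)
    then show ?thesis using sum_nonneg_eq_0_iff[OF good_fin[OF g], of "\<lambda>j. A t j"] good_A[OF g t0] x by auto
  qed
  have "integral {e/2..e} (gf A x) = integral {e/2..e} (\<lambda>_. 0::real)"
    by (rule integral_spike[where S="{e/2}"]) (use zero e in \<open>auto simp: gf_def\<close>)
  then have "processed I A x e = processed I A x (e/2)"
    using processed_split[OF g _ _, of "e/2" e x] e by simp
  moreover have "processed I A x (e/2) < 1" using nd[of "e/2"] e by simp
  ultimately show False using d by simp
qed



lemma block_int:
  fixes lo hi sh :: real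
  assumes "0 \<le> lo" "lo < hi" "0 < sh" and F: "\<And>t. F t = (if lo < t \<and> t \<le> hi then sh else 0)"
    and that: "lo \<le> T"
  shows "((\<lambda>t. F t powr (1/2)) has_integral (sqrt sh * (min hi T - lo))) {0..T}"
proof -
  have h: "((\<lambda>t. if t \<in> {lo..hi} then sqrt sh else 0) has_integral (sqrt sh * (min hi T - lo))) {0..T}"
  proof (subst has_integral_restrict_Int)
    have eq: "{lo..hi} \<inter> {0..T} = {lo..min hi T}" using assms that by auto
    have "((\<lambda>_. sqrt sh) has_integral (sqrt sh * (min hi T - lo))) {lo..min hi T}"
      using has_integral_const_real[of "sqrt sh" lo "min hi T"] assms that by (simp add: mult.commute)
    then show "((\<lambda>_. sqrt sh) has_integral (sqrt sh * (min hi T - lo))) ({lo..hi} \<inter> {0..T})"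
      unfolding eq .
  qed
  show ?thesis
    by (rule has_integral_spike_finite[of "{lo}", OF _ _ h])
       (use assms in \<open>auto simp: F powr_half_sqrt\<close>)
qed

lemma block_integrable:
  fixes lo hi sh :: real
  assumes "0 \<le> lo" "lo < hi" "0 < sh" and F: "\<And>t. F t = (if lo < t \<and> t \<le> hi then sh else 0)"
  shows "(\<lambda>t. F t powr (1/2)) integrable_on {0..T}"
proof (cases "lo \<le> T")
  case True then show ?thesis using block_int[OF assms True] by blast
next
  case False
  have "(\<lambda>t. (0::real)) integrable_on {0..T}" by (rule integrable_0)
  then show ?thesis
    by (rule integrable_spike_finite[where S="{}", rotated 2]) (use False in \<open>auto simp: F\<close>)
qed

lemma block_done:
  fixes lo hi sh :: real
  assumes "0 \<le> lo" "lo < hi" "0 < sh" and F: "\<And>t. F t = (if lo < t \<and> t \<le> hi then sh else 0)"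
    and "sqrt sh * (hi - lo) = 1" "hi \<le> T"
  shows "integral {0..T} (\<lambda>t. F t powr (1/2)) = 1"
proof -
  have "((\<lambda>t. F t powr (1/2)) has_integral (sqrt sh * (min hi T - lo))) {0..T}"
    by (rule block_int[OF assms(1-4)]) (use assms in auto)
  then show ?thesis using assms by (simp add: integral_unique min_def)
qed

definition lv :: "nat \<Rightarrow> nat \<Rightarrow> nat" where "lv K x = x div 2 div K"
definition ix :: "nat \<Rightarrow> nat \<Rightarrow> nat" where "ix K x = x div 2 mod K"
definition crit :: "nat \<Rightarrow> (nat \<Rightarrow> nat) \<Rightarrow> nat \<Rightarrow> bool" where "crit K f x \<longleftrightarrow> ix K x = f (lv K x)"
definition loN :: "nat \<Rightarrow> (nat \<Rightarrow> nat) \<Rightarrow> nat \<Rightarrow> nat" where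
  "loN K f x = (if crit K f x then 2 * lv K x + x mod 2 else if odd x then 3 * K else 2 * K)"
definition lenN :: "nat \<Rightarrow> (nat \<Rightarrow> nat) \<Rightarrow> nat \<Rightarrow> nat" where
  "lenN K f x = (if crit K f x then 1 else K)"
definition shr :: "nat \<Rightarrow> (nat \<Rightarrow> nat) \<Rightarrow> nat \<Rightarrow> real" where
  "shr K f x = (if crit K f x then 1 else 1 / (real K)^2)"
definition osch :: "nat \<Rightarrow> (nat \<Rightarrow> nat) \<Rightarrow> schedule" where
  "osch K f t x = (if x < 2 * K * K \<and> real (loN K f x) < t \<and> t \<le> real (loN K f x + lenN K f x)
     then shr K f x else 0)"

lemma lv_aj[simp]: "j < K \<Longrightarrow> lv K (aj K l j) = l" and ix_aj[simp]: "j < K \<Longrightarrow> ix K (aj K l j) = j"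
  and lv_cj[simp]: "j < K \<Longrightarrow> lv K (cj K l j) = l" and ix_cj[simp]: "j < K \<Longrightarrow> ix K (cj K l j) = j"
  by (auto simp: lv_def ix_def aj_def cj_def)

lemma par_aj[simp]: "aj K l j mod 2 = 0" "odd (aj K l j) = False" and par_cj[simp]: "cj K l j mod 2 = 1" "odd (cj K l j)"
  by (auto simp: aj_def cj_def)

lemma x_decomp: "x = 2 * (lv K x * K + ix K x) + x mod 2" if "0 < K"
  using that by (simp add: lv_def ix_def)

lemma lv_lt: "x < 2 * K * K \<Longrightarrow> lv K x < K"
  by (simp add: lv_def less_mult_imp_div_less div_less_iff_less_mult mult.commute) 

lemma shr_props: "K \<ge> 1 \<Longrightarrow> 0 < shr K f x \<and> shr K f x \<le> 1 \<and> sqrt (shr K f x) * real (lenN K f x) = 1"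
  by (auto simp: shr_def lenN_def real_sqrt_divide)

lemma osch_form: "x < 2 * K * K \<Longrightarrow> osch K f t x =
   (if real (loN K f x) < t \<and> t \<le> real (loN K f x) + real (lenN K f x) then shr K f x else 0)"
  by (simp add: osch_def)

lemma len_pos: "K \<ge> 1 \<Longrightarrow> 0 < lenN K f x" by (simp add: lenN_def)

lemma osch_proc_done:
  assumes "K \<ge> 1" "x < 2 * K * K" "real (loN K f x + lenN K f x) \<le> T"
  shows "processed (inst K K f) (osch K f) x T = 1"
  unfolding processed_def inst_simps
  by (rule block_done[where lo="real (loN K f x)" and hi="real (loN K f x) + real (lenN K f x)"
      and sh="shr K f x"]) (use assms shr_props[OF assms(1)] len_pos[OF assms(1)] osch_form[OF assms(2)] in auto)



lemma sum_le_active: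
  fixes g :: "nat \<Rightarrow> real"
  assumes "finite X" "\<And>x. x \<in> X \<Longrightarrow> g x \<le> (if x \<in> S then c else 0)" "finite S" "0 \<le> c"
    "real (card S) * c \<le> 1"
  shows "sum g X \<le> 1"
proof -
  have "sum g X \<le> (\<Sum>x\<in>X. if x \<in> S then c else 0)" by (rule sum_mono) (use assms in auto)
  also have "\<dots> = (\<Sum>x\<in>{x\<in>X. x \<in> S}. c)" by (rule sum.inter_filter[symmetric]) (use assms in auto)
  also have "\<dots> = real (card {x\<in>X. x \<in> S}) * c" by simp
  also have "\<dots> \<le> real (card S) * c"
    by (intro mult_right_mono) (use assms in \<open>auto intro!: card_mono\<close>)
  finally show ?thesis using assms by simp
qed

lemma hi_crit: assumes "x < 2 * K * K" "crit K f x" shows "loN K f x + lenN K f x \<le> 2 * K"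
proof -
  have "lv K x < K" using lv_lt[OF assms(1)] .
  moreover have "x mod 2 \<le> 1" by simp
  ultimately show ?thesis using assms(2) by (simp add: loN_def lenN_def)
qed

lemma lo_noncrit: "\<not> crit K f x \<Longrightarrow> 2 * K \<le> loN K f x"
  by (simp add: loN_def)

lemma hi_le: assumes "x < 2 * K * K" shows "loN K f x + lenN K f x \<le> 4 * K"
  using hi_crit[OF assms, of f] by (cases "crit K f x") (auto simp: loN_def lenN_def)

lemma parity_card: assumes "K \<ge> 1" shows "card {x. x < 2 * K * K \<and> x mod 2 = p} \<le> K * K"
proof -
  have "{x. x < 2 * K * K \<and> x mod 2 = p} \<subseteq> (\<lambda>(l, j). 2 * (l * K + j) + p) ` ({..<K} \<times> {..<K})"
  proof
    fix x assume x: "x \<in> {x. x < 2 * K * K \<and> x mod 2 = p}"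
    then have "x = 2 * (lv K x * K + ix K x) + p" using x_decomp[of K x] assms by simp
    moreover have "lv K x < K" using x lv_lt by simp
    moreover have "ix K x < K" using assms by (simp add: ix_def)
    ultimately show "x \<in> (\<lambda>(l, j). 2 * (l * K + j) + p) ` ({..<K} \<times> {..<K})" by force
  qed
  then have "card {x. x < 2 * K * K \<and> x mod 2 = p} \<le> card ((\<lambda>(l, j). 2 * (l * K + j) + p) ` ({..<K} \<times> {..<K}))"
    by (intro card_mono) auto
  also have "\<dots> \<le> card ({..<K} \<times> {..<K})" by (rule card_image_le) simp
  finally show ?thesis by (simp add: card_cartesian_product)
qed

lemma nat_two_eq: "2 * (a::nat) + p = 2 * b + q \<Longrightarrow> p < 2 \<Longrightarrow> q < 2 \<Longrightarrow> a = b \<and> p = q"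
  by presburger

lemma osch_sum:
  assumes K: "K \<ge> 1" and t: "0 < t"
  shows "(\<Sum>x\<in>{..<2 * K * K}. osch K f t x) \<le> 1"
proof (cases "t \<le> 2 * K")
  case True
  define S where "S = {x. x < 2 * K * K \<and> crit K f x \<and> real (loN K f x) < t \<and> t \<le> real (loN K f x + lenN K f x)}"
  have finS: "finite S" by (simp add: S_def)
  show ?thesis
  proof (rule sum_le_active[where S=S and c=1])
    show "finite S" by (simp add: S_def)
    fix x assume x: "x \<in> {..<2 * K * K}"
    show "osch K f t x \<le> (if x \<in> S then 1 else 0)"
    proof (cases "crit K f x")
      case True then show ?thesis using x by (auto simp: osch_def S_def shr_def)
    next
      case False
      then have "real (2 * K) \<le> real (loN K f x)" using lo_noncrit[OF False] by linarith
      then show ?thesis using \<open>t \<le> 2 * K\<close> by (auto simp: osch_def)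
    qed
  next
    have "card S \<le> Suc 0" unfolding card_le_Suc0_iff_eq[OF finS]
    proof (intro ballI)
      fix x y assume xy: "x \<in> S" "y \<in> S"
      have "loN K f x = loN K f y"
      proof (rule ccontr)
        assume "loN K f x \<noteq> loN K f y"
        then consider "loN K f x + 1 \<le> loN K f y" | "loN K f y + 1 \<le> loN K f x" by linarith
        then show False
        proof cases
          case 1
          then have "real (loN K f x) + 1 \<le> real (loN K f y)" by linarith
          then show False using xy by (auto simp: S_def lenN_def)
        next
          case 2
          then have "real (loN K f y) + 1 \<le> real (loN K f x)" by linarith
          then show False using xy by (auto simp: S_def lenN_def)
        qed
      qed
      then have "2 * lv K x + x mod 2 = 2 * lv K y + y mod 2" using xy by (simp add: S_def loN_def)
      then have "lv K x = lv K y \<and> x mod 2 = y mod 2" by (rule nat_two_eq) auto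
      moreover have "ix K x = ix K y" using xy calculation by (simp add: S_def crit_def)
      ultimately show "x = y" using x_decomp[of K x] x_decomp[of K y] K by simp
    qed
    then show "real (card S) * 1 \<le> 1" by simp
  qed auto
next
  case False
  define p where "p = (if t \<le> 3 * K then (0::nat) else 1)"
  define S where "S = {x. x < 2 * K * K \<and> x mod 2 = p}"
  show ?thesis
  proof (rule sum_le_active[where S=S and c="1 / (real K)^2"])
    show "finite S" by (simp add: S_def)
    fix x assume x: "x \<in> {..<2 * K * K}"
    show "osch K f t x \<le> (if x \<in> S then 1 / (real K)^2 else 0)"
    proof (cases "crit K f x")
      case True
      then have "real (loN K f x + lenN K f x) \<le> 2 * K" using hi_crit[of x K f] x by (simp del: of_nat_add)
      then show ?thesis using False by (auto simp: osch_def)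
    next
      case nc: False
      show ?thesis
      proof (cases "real (loN K f x) < t \<and> t \<le> real (loN K f x + lenN K f x)")
        case True
        have "x mod 2 = p"
        proof (cases "odd x")
          case True
          then have "loN K f x = 3 * K" using nc by (simp add: loN_def)
          then have "3 * K < t" using \<open>real (loN K f x) < t \<and> _\<close> by simp
          then show ?thesis using True by (simp add: p_def odd_iff_mod_2_eq_one)
        next
          case False
          then have "loN K f x = 2 * K" "lenN K f x = K" using nc by (auto simp: loN_def lenN_def)
          then have "t \<le> 3 * K" using \<open>real (loN K f x) < t \<and> _\<close> by simp
          then show ?thesis using False by (simp add: p_def even_iff_mod_2_eq_zero)
        qed
        then show ?thesis using x nc True by (auto simp: osch_def S_def shr_def)
      next
        case False then show ?thesis by (auto simp: osch_def)
      qed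
    qed
  next
    have "real (card S) \<le> real K * real K" using parity_card[OF K, of p] by (simp add: S_def of_nat_mult[symmetric] del: of_nat_mult)
    then show "real (card S) * (1 / (real K)^2) \<le> 1" using K by (simp add: field_simps power2_eq_square)
  qed auto
qed



lemma arcs_order:
  assumes "(y, x) \<in> arcs (inst K K f)" "\<forall>l. f l < K"
  shows "loN K f y + lenN K f y \<le> loN K f x"
  using assms(1) unfolding arcs_inst
proof (elim disjE exE conjE)
  fix l j assume h: "l < K" "j < K" "y = aj K l j" "x = cj K l j"
  then have "crit K f y = crit K f x" by (simp add: crit_def)
  then show ?thesis using h by (cases "crit K f x") (auto simp: loN_def lenN_def)
next
  fix l j assume h: "Suc l < K" "j < K" "y = cj K l (f l)" "x = aj K (Suc l) j"
  have fl: "f l < K" using assms(2) by simp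
  have cy: "crit K f y" using h fl by (simp add: crit_def)
  have "loN K f y + lenN K f y = 2 * l + 2" using cy h fl by (simp add: loN_def lenN_def)
  moreover have "2 * l + 2 \<le> loN K f x" using h by (auto simp: loN_def)
  ultimately show ?thesis by simp
qed

lemma osch_integrable: assumes "K \<ge> 1" shows "(\<lambda>t. osch K f t x powr (1/2)) integrable_on {0..T}"
proof (cases "x < 2 * K * K")
  case True
  show ?thesis
    by (rule block_integrable[where lo="real (loN K f x)" and hi="real (loN K f x) + real (lenN K f x)"
      and sh="shr K f x"]) (use assms shr_props[OF assms] len_pos[OF assms] osch_form[OF True] in auto)
next
  case False
  then have "(\<lambda>t. osch K f t x powr (1/2)) = (\<lambda>t. 0)" by (auto simp: osch_def)
  then show ?thesis by (simp add: integrable_0)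
qed

lemma osch_feasible:
  assumes K: "K \<ge> 1" and fK: "\<forall>l. f l < K"
  shows "feasible (inst K K f) (osch K f)"
  unfolding feasible_def
proof (intro conjI allI impI ballI)
  fix t :: real and j assume "0 < t"
  show "0 \<le> osch K f t j" "osch K f t j \<le> real (machines (inst K K f))"
    using shr_props[OF K, of f j] by (auto simp: osch_def)
next
  fix t :: real and j assume "0 < t" "j \<notin> jobs (inst K K f)"
  then show "osch K f t j = 0" by (simp add: osch_def)
next
  fix t :: real assume "0 < t"
  then show "(\<Sum>j\<in>jobs (inst K K f). osch K f t j) \<le> real (machines (inst K K f))"
    using osch_sum[OF K] by simp
next
  fix j T show "(\<lambda>t. proc (inst K K f) j (osch K f t j)) integrable_on {0..T}"
    using osch_integrable[OF K] by simp
next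
  fix p assume p: "p \<in> arcs (inst K K f)"
  obtain y x where yx: "p = (y, x)" by (cases p)
  have arc: "(y, x) \<in> arcs (inst K K f)" using p yx by simp
  have sub: "arcs (inst K K f) \<subseteq> jobs (inst K K f) \<times> jobs (inst K K f)"
    using inst_valid[OF _ K K, of f] fK by (auto simp: power_instance_def valid_instance_def)
  have xy: "x < 2 * K * K" "y < 2 * K * K" using sub arc by auto
  have ord: "loN K f y + lenN K f y \<le> loN K f x" by (rule arcs_order[OF arc fK])
  show "case p of (j1, j2) \<Rightarrow> \<forall>t>0. 0 < osch K f t j2 \<longrightarrow> jsize (inst K K f) j1 \<le> processed (inst K K f) (osch K f) j1 t"
    unfolding yx prod.case
  proof (intro allI impI)
    fix t :: real assume "0 < t" "0 < osch K f t x"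
    then have "real (loN K f x) < t" by (auto simp: osch_def split: if_splits)
    then have "real (loN K f y + lenN K f y) \<le> t" using ord by linarith
    then show "jsize (inst K K f) y \<le> processed (inst K K f) (osch K f) y t"
      using osch_proc_done[OF K xy(2)] by simp
  qed
next
  fix j assume "j \<in> jobs (inst K K f)"
  then have "processed (inst K K f) (osch K f) j (real (loN K f j + lenN K f j)) = 1"
    using osch_proc_done[OF K] by simp
  then show "\<exists>T. jsize (inst K K f) j \<le> processed (inst K K f) (osch K f) j T"
    by (intro exI[of _ "real (loN K f j + lenN K f j)"]) simp
qed

lemma osch_makespan:
  assumes K: "K \<ge> 1"
  shows "makespan (inst K K f) (osch K f) \<le> ereal (4 * K)"
  unfolding makespan_def
proof (rule Sup_least)
  fix z assume "z \<in> insert 0 {ereal t |t. 0 < t \<and> 0 < (\<Sum>j\<in>jobs (inst K K f). osch K f t j)}"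
  then consider "z = 0" | t where "z = ereal t" "0 < t" "0 < (\<Sum>j\<in>jobs (inst K K f). osch K f t j)" by blast
  then show "z \<le> ereal (4 * K)"
  proof cases
    case 1 then show ?thesis by simp
  next
    case 2
    then obtain x where x: "x \<in> jobs (inst K K f)" "osch K f t x \<noteq> 0"
      by (metis (no_types, lifting) less_irrefl sum.neutral)
    then have "t \<le> real (loN K f x + lenN K f x)" "x < 2 * K * K" by (auto simp: osch_def split: if_splits)
    moreover have "loN K f x + lenN K f x \<le> 4 * K" using hi_le[OF \<open>x < 2 * K * K\<close>] .
    ultimately have "t \<le> 4 * K" by (smt (verit) of_nat_le_iff of_nat_mult numeral_times_numeral)
    then show ?thesis using 2 by simp
  qed
qed

lemma opt_bound:
  assumes K: "K \<ge> 1" and fK: "\<forall>l. f l < K"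
  shows "opt (inst K K f) \<le> ereal (4 * K)"
proof -
  have "opt (inst K K f) \<le> makespan (inst K K f) (osch K f)"
    unfolding opt_def by (rule Inf_lower) (use osch_feasible[OF K fK] in blast)
  then show ?thesis using osch_makespan[OF K, of f] by simp
qed



definition ctj :: "(gps_inst \<Rightarrow> schedule) \<Rightarrow> nat \<Rightarrow> (nat \<Rightarrow> nat) \<Rightarrow> nat \<Rightarrow> nat \<Rightarrow> real" where
  "ctj ALG K f i j = ctime (inst K (Suc i) f) (ALG (inst K (Suc i) f)) (aj K i j)"

definition ch :: "(gps_inst \<Rightarrow> schedule) \<Rightarrow> nat \<Rightarrow> (nat \<Rightarrow> nat) \<Rightarrow> nat \<Rightarrow> nat" where
  "ch ALG K f i = (SOME j. j < K \<and> (\<forall>j'<K. ctj ALG K f i j' \<le> ctj ALG K f i j))"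

primrec FF :: "(gps_inst \<Rightarrow> schedule) \<Rightarrow> nat \<Rightarrow> nat \<Rightarrow> (nat \<Rightarrow> nat)" where
  "FF ALG K 0 = (\<lambda>_. 0)"
| "FF ALG K (Suc i) = (FF ALG K i)(i := ch ALG K (FF ALG K i) i)"

lemma ch_props:
  assumes "K \<ge> 1"
  shows "ch ALG K f i < K \<and> (\<forall>j'<K. ctj ALG K f i j' \<le> ctj ALG K f i (ch ALG K f i))"
proof -
  let ?c = "ctj ALG K f i"
  have "0 \<in> {..<K}" using assms by simp
  then have fin: "finite (?c ` {..<K})" "?c ` {..<K} \<noteq> {}" by auto
  obtain j where j: "j < K" "?c j = Max (?c ` {..<K})" using Max_in[OF fin] by auto
  have "j < K \<and> (\<forall>j'<K. ?c j' \<le> ?c j)" using j Max_ge[OF fin(1)] by auto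
  then have "\<exists>j. j < K \<and> (\<forall>j'<K. ?c j' \<le> ?c j)" by blast
  then show ?thesis unfolding ch_def by (rule someI_ex)
qed

lemma FF_lt: "K \<ge> 1 \<Longrightarrow> FF ALG K i l < K"
  by (induction i arbitrary: l) (auto simp: ch_props)

lemma FF_stable: "i \<le> i' \<Longrightarrow> l < i \<Longrightarrow> FF ALG K i' l = FF ALG K i l"
proof (induction i' arbitrary: i)
  case 0 then show ?case by simp
next
  case (Suc i')
  show ?case
  proof (cases "i = Suc i'")
    case True then show ?thesis by simp
  next
    case False
    then have "i \<le> i'" using Suc.prems by simp
    then show ?thesis using Suc by simp
  qed
qed

lemma inst_cong: "(\<And>l. Suc l < L \<Longrightarrow> f l = g l) \<Longrightarrow> inst K L f = inst K L g"
  unfolding inst_def by (auto 0 4)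

lemma feas_arc:
  assumes "good I A" "(x, y) \<in> arcs I" "0 < t" "0 < A t y"
  shows "jsize I x \<le> processed I A x t"
  using assms unfolding good_def feasible_def by fastforce



definition Fs :: "(gps_inst \<Rightarrow> schedule) \<Rightarrow> nat \<Rightarrow> nat \<Rightarrow> nat" where "Fs ALG K = FF ALG K K"
definition ee :: "(gps_inst \<Rightarrow> schedule) \<Rightarrow> nat \<Rightarrow> nat \<Rightarrow> real" where
  "ee ALG K i = ctime (inst K (Suc i) (Fs ALG K)) (ALG (inst K (Suc i) (Fs ALG K))) (aj K i (Fs ALG K i))"

lemma online_good:
  assumes "online_alg (power_instance (1/2)) ALG" "power_instance (1/2) I" "machines I = 1"
  shows "good I (ALG I)"
  using assms by (auto simp: good_def online_alg_def)

lemma level_facts: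
  assumes alg: "online_alg (power_instance (1/2)) ALG" and K: "K \<ge> 1" and i: "i < K"
  shows "0 < ee ALG K i"
    "\<And>t. 0 \<le> t \<Longrightarrow> t < ee ALG K i \<Longrightarrow>
        processed (inst K K (Fs ALG K)) (ALG (inst K K (Fs ALG K))) (aj K i (Fs ALG K i)) t < 1"
    "\<And>j. j < K \<Longrightarrow> 1 \<le> processed (inst K K (Fs ALG K)) (ALG (inst K K (Fs ALG K))) (aj K i j) (ee ALG K i)"
proof -
  define F where "F = Fs ALG K"
  define J where "J = inst K K F"
  define A where "A = ALG J"
  define Ii where "Ii = inst K (Suc i) F"
  define B where "B = ALG Ii"
  define e where "e = ee ALG K i"
  have fK: "\<forall>l. F l < K" using FF_lt[OF K] by (simp add: F_def Fs_def)
  have vJ: "power_instance (1/2) J" unfolding J_def by (rule inst_valid) (use fK K in auto)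
  have vI: "power_instance (1/2) Ii" unfolding Ii_def by (rule inst_valid) (use fK K in auto)
  have gJ: "good J A" unfolding A_def by (rule online_good[OF alg vJ]) (simp add: J_def)
  have gI: "good Ii B" unfolding B_def by (rule online_good[OF alg vI]) (simp add: Ii_def)
  have Fi: "F i = ch ALG K (FF ALG K i) i"
    using FF_stable[of "Suc i" K i ALG] i by (simp add: F_def Fs_def)
  have Ieq: "inst K (Suc i) (FF ALG K i) = Ii"
    unfolding Ii_def by (rule inst_cong) (use FF_stable[of i K] i in \<open>auto simp: F_def Fs_def\<close>)
  have ctj_eq: "ctj ALG K (FF ALG K i) i j = ctime Ii B (aj K i j)" for j
    by (simp add: ctj_def Ieq B_def)
  have eq_e: "e = ctime Ii B (aj K i (F i))" by (simp add: e_def ee_def F_def Ii_def B_def)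
  have maxc: "\<And>j. j < K \<Longrightarrow> ctime Ii B (aj K i j) \<le> e"
    using ch_props[OF K, of ALG "FF ALG K i" i] unfolding eq_e Fi ctj_eq by auto
  have jobI: "aj K i j \<in> jobs Ii" if "j < K" for j using aj_lt[of i "Suc i" j K] that by (simp add: Ii_def)
  have cp: "0 < ctime Ii B (aj K i j)" "1 \<le> processed Ii B (aj K i j) (ctime Ii B (aj K i j))"
    "\<And>t. 0 \<le> t \<Longrightarrow> t < ctime Ii B (aj K i j) \<Longrightarrow> processed Ii B (aj K i j) t < 1" if "j < K" for j
    using ctime_props[OF gI jobI[OF that]] by (auto simp: Ii_def)
  have Fl: "F i < K" using fK by simp
  show e0: "0 < ee ALG K i" using cp(1)[OF Fl] eq_e e_def by simp
  have C2: "processed Ii B (aj K i (F i)) t < 1" if "0 \<le> t" "t < e" for t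
    using cp(3)[OF Fl] that eq_e by simp
  have C3: "1 \<le> processed Ii B (aj K i j) e" if "j < K" for j
  proof -
    have "processed Ii B (aj K i j) (ctime Ii B (aj K i j)) \<le> processed Ii B (aj K i j) e"
      by (rule processed_mono[OF gI]) (use cp(1)[OF that] maxc[OF that] in auto)
    then show ?thesis using cp(2)[OF that] by simp
  qed
  have agr: "\<And>t. 0 < t \<Longrightarrow> t < e \<Longrightarrow> ALG J t = ALG Ii t"
  proof (rule agree[OF alg vJ vI])
    show "machines J = 1" "machines Ii = 1" by (simp_all add: J_def Ii_def)
    fix s assume s: "0 \<le> s" "s < e" "\<forall>j. processed J (ALG J) j s = processed Ii (ALG Ii) j s"
    show "view J (ALG J) s = view Ii (ALG Ii) s"
      unfolding J_def Ii_def
      by (rule view_match) (use gJ gI fK K i s C2 in \<open>auto simp: J_def Ii_def A_def B_def\<close>)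
  qed
  have pc: "processed J A x t = processed Ii B x t" if "0 \<le> t" "t \<le> e" for x t
    by (rule processed_cong[OF gJ gI]) (use agr that in \<open>auto simp: A_def B_def\<close>)
  show "\<And>t. 0 \<le> t \<Longrightarrow> t < ee ALG K i \<Longrightarrow>
        processed (inst K K (Fs ALG K)) (ALG (inst K K (Fs ALG K))) (aj K i (Fs ALG K i)) t < 1"
    using pc C2 by (auto simp: e_def J_def A_def F_def)
  show "\<And>j. j < K \<Longrightarrow> 1 \<le> processed (inst K K (Fs ALG K)) (ALG (inst K K (Fs ALG K))) (aj K i j) (ee ALG K i)"
    using pc[of e] C3 e0 by (auto simp: e_def J_def A_def F_def)
qed



lemma ereal_ratio:
  fixes a q :: ereal and a0 o0 :: real
  assumes "0 < a0" "ereal a0 \<le> a" "0 \<le> q" "q \<le> ereal o0" "0 < o0"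
  shows "ereal (a0 / o0) \<le> a / q"
proof (cases q)
  case (real r)
  show ?thesis
  proof (cases "r = 0")
    case True
    then show ?thesis using assms real by (cases a) (auto simp: divide_ereal_def)
  next
    case False
    then have r: "0 < r" "r \<le> o0" using assms real by auto
    show ?thesis
    proof (cases a)
      case (real x)
      have "a0 / o0 \<le> x / r"
        using assms r real by (intro frac_le) auto
      then show ?thesis using \<open>a = ereal x\<close> \<open>q = ereal r\<close> r by simp
    qed (use assms r real in auto)
  qed
qed (use assms in auto)

lemma real_final:
  fixes K :: nat assumes "K \<ge> 8192"
  shows "real (2 * K * K) powr (1/8) < sqrt (real K) / 8"
proof -
  define y where "y = real (2 * K * K) powr (1/8)"
  define x where "x = sqrt (real K) / 8"
  have Kp: "real K > 0" using assms by simp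
  have y0: "0 < y" using Kp by (simp add: y_def)
  have "y ^ 8 = y powr (real 8)" using y0 by (simp add: powr_realpow)
  also have "\<dots> = real (2 * K * K)" unfolding y_def powr_powr using Kp by simp
  finally have y8: "y ^ 8 = 2 * real K * real K" by simp
  have s8: "sqrt (real K) ^ 8 = real K ^ 4"
  proof -
    have h2: "sqrt (real K) ^ 2 = real K" by simp
    have "sqrt (real K) ^ 8 = sqrt (real K) ^ (2 * 4)" by simp
    also have "\<dots> = (sqrt (real K) ^ 2) ^ 4" by (rule power_mult)
    also have "\<dots> = real K ^ 4" by (simp only: h2)
    finally show ?thesis .
  qed
  have x8: "x ^ 8 = real K ^ 4 / 8 ^ 8" unfolding x_def by (simp add: power_divide s8)
  have "real K \<ge> 8192" using assms by simp
  then have "real K * real K \<ge> 8192 * 8192" by (intro mult_mono) auto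
  then have "2 * 8 ^ 8 < real K * real K" by simp
  then have "2 * 8 ^ 8 * (real K * real K) < real K * real K * (real K * real K)"
    using Kp by (intro mult_strict_right_mono) auto
  then have "2 * real K * real K < real K ^ 4 / 8 ^ 8" by (simp add: field_simps power4_eq_xxxx)
  then have "y ^ 8 < x ^ 8" using x8 y8 by simp
  then have "y < x" by (rule power_less_imp_less_base) (simp add: x_def)
  then show ?thesis by (simp add: x_def y_def)
qed



lemma jJ: "j < K \<Longrightarrow> l < K \<Longrightarrow> aj K l j \<in> jobs (inst K K f)"
  using aj_lt[of l K j K] by simp

lemma setup_J:
  assumes alg: "online_alg (power_instance (1/2)) ALG" and K: "K \<ge> 1"
  shows "good (inst K K (Fs ALG K)) (ALG (inst K K (Fs ALG K)))" "\<forall>l. Fs ALG K l < K"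
proof -
  show fK: "\<forall>l. Fs ALG K l < K" using FF_lt[OF K] by (simp add: Fs_def)
  have "power_instance (1/2) (inst K K (Fs ALG K))" by (rule inst_valid) (use fK K in auto)
  then show "good (inst K K (Fs ALG K)) (ALG (inst K K (Fs ALG K)))"
    by (rule online_good[OF alg]) simp
qed

lemma next_zero:
  assumes alg: "online_alg (power_instance (1/2)) ALG" and K: "K \<ge> 1" and i: "Suc i < K"
    and j: "j < K" and t: "0 < t" "t \<le> ee ALG K i"
  shows "ALG (inst K K (Fs ALG K)) t (aj K (Suc i) j) = 0"
proof -
  define F where "F = Fs ALG K"
  define J where "J = inst K K F"
  define A where "A = ALG J"
  have gJ: "good J A" and fK: "\<forall>l. F l < K" using setup_J[OF alg K] by (simp_all add: J_def A_def F_def)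
  have arc1: "(aj K i (F i), cj K i (F i)) \<in> arcs J" unfolding J_def arcs_inst using fK i
    by (intro disjI1 exI[of _ i] exI[of _ "F i"]) auto
  have arc2: "(cj K i (F i), aj K (Suc i) j) \<in> arcs J" unfolding J_def arcs_inst using i j by auto
  have zc: "A t' (cj K i (F i)) = 0" if "0 < t'" "t' < ee ALG K i" for t'
  proof (rule ccontr)
    assume "A t' (cj K i (F i)) \<noteq> 0"
    then have "0 < A t' (cj K i (F i))" using good_A[OF gJ that(1), of "cj K i (F i)"] by linarith
    then have "1 \<le> processed J A (aj K i (F i)) t'" using feas_arc[OF gJ arc1 that(1)] by (simp add: J_def)
    moreover have "processed J A (aj K i (F i)) t' < 1"
      using level_facts(2)[OF alg K _ _ that(2)] i that(1) by (simp add: J_def A_def F_def)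
    ultimately show False by simp
  qed
  have "processed J A (cj K i (F i)) t = 0" by (rule processed_zero[OF gJ]) (use zc t in auto)
  then have "\<not> 0 < A t (aj K (Suc i) j)" using feas_arc[OF gJ arc2 t(1)] by (auto simp: J_def)
  then show ?thesis using good_A[OF gJ t(1), of "aj K (Suc i) j"] by (simp add: J_def A_def F_def)
qed

lemma growth:
  assumes alg: "online_alg (power_instance (1/2)) ALG" and K: "K \<ge> 1"
  shows "i < K \<Longrightarrow> real (Suc i) * sqrt K \<le> ee ALG K i"
proof (induction i)
  case 0
  have gJ: "good (inst K K (Fs ALG K)) (ALG (inst K K (Fs ALG K)))" using setup_J[OF alg K] by simp
  have "0 + sqrt K \<le> ee ALG K 0"
    by (rule work_bound[OF gJ K, where x="aj K 0"])
       (use level_facts(3)[OF alg K 0] jJ K in \<open>auto simp: inj_on_def\<close>)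
  then show ?case by simp
next
  case (Suc i)
  have gJ: "good (inst K K (Fs ALG K)) (ALG (inst K K (Fs ALG K)))" using setup_J[OF alg K] by simp
  have "ee ALG K i + sqrt K \<le> ee ALG K (Suc i)"
    by (rule work_bound[OF gJ K, where x="aj K (Suc i)"])
       (use level_facts(1,3)[OF alg K] Suc.prems next_zero[OF alg K Suc.prems] jJ in \<open>auto simp: inj_on_def less_imp_le\<close>)
  then show ?case using Suc by (simp add: algebra_simps)
qed

lemma alg_makespan:
  assumes alg: "online_alg (power_instance (1/2)) ALG" and K: "K \<ge> 1"
  shows "ereal (real K * sqrt K / 2) \<le> makespan (inst K K (Fs ALG K)) (ALG (inst K K (Fs ALG K)))"
proof -
  define i where "i = K - 1"
  have i: "i < K" "Suc i = K" using K by (auto simp: i_def)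
  have gJ: "good (inst K K (Fs ALG K)) (ALG (inst K K (Fs ALG K)))" and fK: "\<forall>l. Fs ALG K l < K"
    using setup_J[OF alg K] by simp_all
  have "ereal (ee ALG K i / 2) \<le> makespan (inst K K (Fs ALG K)) (ALG (inst K K (Fs ALG K)))"
    by (rule makespan_lower[OF gJ jJ[OF _ i(1)] level_facts(1)[OF alg K i(1)] level_facts(2)[OF alg K i(1)]
          level_facts(3)[OF alg K i(1)]]) (use fK in auto)
  moreover have "real K * sqrt K \<le> ee ALG K i" using growth[OF alg K i(1)] i by simp
  ultimately show ?thesis by (meson divide_right_mono ereal_less_eq(3) order_trans zero_le_numeral)
qed

lemma opt_nonneg: "0 \<le> opt I"
  unfolding opt_def makespan_def by (rule Inf_greatest) (auto intro: Sup_upper2)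

lemma ratio_lower:
  assumes alg: "online_alg (power_instance (1/2)) ALG" and K: "K \<ge> 1"
  shows "ereal (sqrt K / 8) \<le> comp_ratio (power_instance (1/2)) ALG (2 * K * K)"
proof -
  define J where "J = inst K K (Fs ALG K)"
  have fK: "\<forall>l. Fs ALG K l < K" using setup_J[OF alg K] by simp
  have vJ: "power_instance (1/2) J" unfolding J_def by (rule inst_valid) (use fK K in auto)
  have Kp: "0 < real K" using K by simp
  have r1: "ereal ((real K * sqrt K / 2) / (4 * real K)) \<le> makespan J (ALG J) / opt J"
    by (rule ereal_ratio) (use alg_makespan[OF alg K] opt_bound[OF K fK] opt_nonneg Kp in \<open>auto simp: J_def\<close>)
  have eq: "(real K * sqrt K / 2) / (4 * real K) = sqrt K / 8" using Kp by (simp add: field_simps)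
  have r2: "makespan J (ALG J) / opt J \<le> comp_ratio (power_instance (1/2)) ALG (2 * K * K)"
    unfolding comp_ratio_def
    by (rule Sup_upper) (use vJ K Kp in \<open>auto simp: J_def lessThan_empty_iff intro!: exI[of _ J]\<close>)
  from r1 r2 show ?thesis unfolding eq by (rule order_trans)
qed

theorem theorem3:
  shows "\<exists>\<gamma>::real. 0 < \<gamma> \<and> \<gamma> < 1 \<and>
    (\<forall>ALG. online_alg (power_instance \<gamma>) ALG \<longrightarrow>
       \<not> subpolynomial (comp_ratio (power_instance \<gamma>) ALG))"
proof (intro exI[of _ "1/2"] conjI allI impI)
  fix ALG assume alg: "online_alg (power_instance (1/2)) ALG"
  show "\<not> subpolynomial (comp_ratio (power_instance (1/2)) ALG)"
  proof
    assume "subpolynomial (comp_ratio (power_instance (1/2)) ALG)"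
    then have "eventually (\<lambda>n. comp_ratio (power_instance (1/2)) ALG n \<le> ereal (real n powr (1/8))) sequentially"
      unfolding subpolynomial_def by simp
    then obtain N where N: "\<And>n. n \<ge> N \<Longrightarrow> comp_ratio (power_instance (1/2)) ALG n \<le> ereal (real n powr (1/8))"
      unfolding eventually_sequentially by blast
    define K where "K = N + 8192"
    have K: "K \<ge> 1" "K \<ge> 8192" by (auto simp: K_def)
    have "N \<le> K" by (simp add: K_def)
    also have "K \<le> 2 * K * K" using K by simp
    finally have "comp_ratio (power_instance (1/2)) ALG (2 * K * K) \<le> ereal (real (2 * K * K) powr (1/8))"
      using N by blast
    moreover have "ereal (sqrt K / 8) \<le> comp_ratio (power_instance (1/2)) ALG (2 * K * K)"
      by (rule ratio_lower[OF alg K(1)])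
    ultimately have "sqrt K / 8 \<le> real (2 * K * K) powr (1/8)" by (meson ereal_less_eq(3) order_trans)
    then show False using real_final[OF K(2)] by simp
  qed
qed simp_all


end
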